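(* Let $u_{1:T}=(u_1,\ldots,u_T)\in(\mathbb{R}^d)^T$, let $1\le k\le T$ and $\tau\in[0:T-k]$, and let $w_{1:T}$ be obtained from $u_{1:T}$ by local averaging: $w_t=u_t$ for $t\notin[\tau+1:\tau+k]$ and $w_{\tau+1}=\cdots=w_{\tau+k}=k^{-1}\sum_{i=1}^k u_{\tau+i}$. Let $\bar u=T^{-1}\sum_t u_t$ and $\bar w=T^{-1}\sum_t w_t$. Then 1. $\sum_{t=1}^{T-1}\|w_{t+1}-w_t\|_2\le\sum_{t=1}^{T-1}\|u_{t+1}-u_t\|_2$; 2. $\sum_{t=1}^T\|w_t-\bar w\|_2\le\sum_{t=1}^T\|u_t-\bar u\|_2$; 3. $\sum_{t=1}^T\|w_t-\bar w\|_2^2\le\sum_{t=1}^T\|u_t-\bar u\|_2^2$; 4. $\sum_{t=1}^T\|w_t\|_2\le\sum_{t=1}^T\|u_t\|_2$ and $\sum_{t=1}^T\|w_t\|_2^2\le\sum_{t=1}^T\|u_t\|_2^2$. *)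

theory Defs
  imports "HOL-Analysis.Analysis"
begin

definition local_avg :: "nat \<Rightarrow> nat \<Rightarrow> (nat \<Rightarrow> real ^ 'd) \<Rightarrow> nat \<Rightarrow> real ^ 'd" where
  "local_avg k \<tau> u t =
     (if t \<in> {\<tau>+1..\<tau>+k} then (1 / real k) *\<^sub>R (\<Sum>i=1..k. u (\<tau> + i)) else u t)"

definition seq_mean :: "nat \<Rightarrow> (nat \<Rightarrow> real ^ 'd) \<Rightarrow> real ^ 'd" where
  "seq_mean T u = (1 / real T) *\<^sub>R (\<Sum>t=1..T. u t)"

end

theory Submission
  imports Defs
begin

definition avgop :: "nat \<Rightarrow> nat \<Rightarrow> (nat \<Rightarrow> 'a::real_vector) \<Rightarrow> nat \<Rightarrow> 'a" where
  "avgop k \<tau> g t = (if t \<in> {\<tau>+1..\<tau>+k} then (1 / real k) *\<^sub>R (\<Sum>i=1..k. g (\<tau> + i)) else g t)"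

lemma sum_avgop:
  assumes "1 \<le> k" "\<tau> + k \<le> T"
  shows "(\<Sum>t=1..T. avgop k \<tau> g t) = (\<Sum>t=1..T. g t)"
proof -
  let ?W = "{\<tau>+1..\<tau>+k}"
  have sub: "?W \<subseteq> {1..T}" using assms by auto
  have fin: "finite {1..T}" by simp
  have "(\<Sum>t\<in>?W. avgop k \<tau> g t) = (\<Sum>t\<in>?W. (1 / real k) *\<^sub>R (\<Sum>i=1..k. g (\<tau> + i)))"
    by (rule sum.cong) (auto simp: avgop_def)
  also have "\<dots> = real (card ?W) *\<^sub>R ((1 / real k) *\<^sub>R (\<Sum>i=1..k. g (\<tau> + i)))"
    by (rule sum_constant_scaleR)
  also have "\<dots> = (\<Sum>i=1..k. g (\<tau> + i))" using assms by simp
  also have "\<dots> = (\<Sum>t\<in>?W. g t)"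
    using sum.shift_bounds_cl_nat_ivl[of g 1 \<tau> k] by (simp add: add.commute)
  finally have W: "(\<Sum>t\<in>?W. avgop k \<tau> g t) = (\<Sum>t\<in>?W. g t)" .
  have R: "(\<Sum>t\<in>{1..T} - ?W. avgop k \<tau> g t) = (\<Sum>t\<in>{1..T} - ?W. g t)"
    by (rule sum.cong) (auto simp: avgop_def)
  show ?thesis
    using sum.subset_diff[OF sub fin, of "avgop k \<tau> g"] sum.subset_diff[OF sub fin, of g] W R
    by simp
qed

lemma avgop_norm:
  assumes "1 \<le> k"
  shows "norm (avgop k \<tau> g t) \<le> avgop k \<tau> (\<lambda>s. norm (g s)) t"
proof (cases "t \<in> {\<tau>+1..\<tau>+k}")
  case True
  have "norm ((1 / real k) *\<^sub>R (\<Sum>i=1..k. g (\<tau> + i))) = (1 / real k) * norm (\<Sum>i=1..k. g (\<tau> + i))"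
    by simp
  also have "\<dots> \<le> (1 / real k) * (\<Sum>i=1..k. norm (g (\<tau> + i)))"
    by (rule mult_left_mono) (auto intro: norm_sum)
  finally show ?thesis unfolding avgop_def if_P[OF True] by simp
next
  case False then show ?thesis unfolding avgop_def if_not_P[OF False] by simp
qed

lemma avgop_sq:
  assumes "1 \<le> k"
  shows "(norm (avgop k \<tau> g t))\<^sup>2 \<le> avgop k \<tau> (\<lambda>s. (norm (g s))\<^sup>2) t"
proof (cases "t \<in> {\<tau>+1..\<tau>+k}")
  case True
  have kp: "real k > 0" using assms by simp
  have "norm ((1 / real k) *\<^sub>R (\<Sum>i=1..k. g (\<tau> + i))) \<le> (1 / real k) * (\<Sum>i=1..k. norm (g (\<tau> + i)))"
    using avgop_norm[OF assms, of \<tau> g t] True by (simp add: avgop_def)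
  hence "(norm ((1 / real k) *\<^sub>R (\<Sum>i=1..k. g (\<tau> + i))))\<^sup>2 \<le> ((1 / real k) * (\<Sum>i=1..k. norm (g (\<tau> + i))))\<^sup>2"
    by (rule power_mono) simp
  also have "\<dots> = (\<Sum>i=1..k. norm (g (\<tau> + i)))\<^sup>2 / (real k)\<^sup>2"
    by (simp add: power_divide)
  also have "\<dots> \<le> ((\<Sum>i=1..k. (norm (g (\<tau> + i)))\<^sup>2) * real k) / (real k)\<^sup>2"
    using sum_squared_le_sum_of_squares[of "\<lambda>i. norm (g (\<tau> + i))" "{1..k}"]
    by (intro divide_right_mono) auto
  also have "\<dots> = (1 / real k) * (\<Sum>i=1..k. (norm (g (\<tau> + i)))\<^sup>2)"
    using kp by (simp add: power2_eq_square field_simps)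
  finally show ?thesis unfolding avgop_def if_P[OF True] by simp
next
  case False then show ?thesis unfolding avgop_def if_not_P[OF False] by simp
qed

definition TVs :: "(nat \<Rightarrow> 'a::real_normed_vector) \<Rightarrow> nat \<Rightarrow> nat \<Rightarrow> real" where
  "TVs u a b = (\<Sum>t=a..<b. norm (u (Suc t) - u t))"

lemma TVs_add: "a \<le> b \<Longrightarrow> b \<le> c \<Longrightarrow> TVs u a b + TVs u b c = TVs u a c"
  unfolding TVs_def by (rule sum.atLeastLessThan_concat)

lemma TVs_tri: "a \<le> b \<Longrightarrow> norm (u b - u a) \<le> TVs u a b"
  unfolding TVs_def using sum_Suc_diff'[of a b u] norm_sum[of "\<lambda>t. u (Suc t) - u t" "{a..<b}"]
  by simp

lemma TVs_mono: "a \<le> a' \<Longrightarrow> b' \<le> b \<Longrightarrow> TVs u a' b' \<le> TVs u a b"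
  unfolding TVs_def by (rule sum_mono2) auto

lemma TVs_telescope:
  assumes mono: "\<And>x y. x \<le> y \<Longrightarrow> \<sigma> x \<le> (\<sigma> y :: nat)" and "a \<le> b"
  shows "(\<Sum>t=a..<b. TVs u (\<sigma> t) (\<sigma> (Suc t))) = TVs u (\<sigma> a) (\<sigma> b)"
  using assms(2)
proof (induction b)
  case 0 then show ?case by (simp add: TVs_def)
next
  case (Suc b)
  show ?case
  proof (cases "a = Suc b")
    case True then show ?thesis by (simp add: TVs_def)
  next
    case False
    then have "a \<le> b" using Suc.prems by simp
    then show ?thesis using Suc.IH TVs_add[of "\<sigma> a" "\<sigma> b" "\<sigma> (Suc b)" u] mono[of a b] mono[of b "Suc b"]
      by simp
  qed
qed

lemma TV_reparam:
  assumes mono: "\<And>x y. x \<le> y \<Longrightarrow> \<sigma> x \<le> (\<sigma> y :: nat)" and "1 \<le> \<sigma> 1" "\<sigma> T \<le> T" "1 \<le> T"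
  shows "(\<Sum>t=1..<T. norm (u (\<sigma> (Suc t)) - u (\<sigma> t))) \<le> TVs u 1 T"
proof -
  have "(\<Sum>t=1..<T. norm (u (\<sigma> (Suc t)) - u (\<sigma> t))) \<le> (\<Sum>t=1..<T. TVs u (\<sigma> t) (\<sigma> (Suc t)))"
    by (rule sum_mono, rule TVs_tri, rule mono) simp
  also have "\<dots> = TVs u (\<sigma> 1) (\<sigma> T)" by (rule TVs_telescope) (use assms(4) in \<open>auto intro: mono\<close>)
  also have "\<dots> \<le> TVs u 1 T" using assms by (intro TVs_mono) auto
  finally show ?thesis .
qed

theorem lemma10:
  fixes u w :: "nat \<Rightarrow> real ^ 'd" and T k \<tau> :: nat
  assumes "1 \<le> k" and "k \<le> T" and "\<tau> \<le> T - k"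
    and "w = local_avg k \<tau> u"
  shows "(\<Sum>t=1..T-1. norm (w (t+1) - w t)) \<le> (\<Sum>t=1..T-1. norm (u (t+1) - u t)) \<and>
     (\<Sum>t=1..T. norm (w t - seq_mean T w)) \<le> (\<Sum>t=1..T. norm (u t - seq_mean T u)) \<and>
     (\<Sum>t=1..T. (norm (w t - seq_mean T w))\<^sup>2) \<le> (\<Sum>t=1..T. (norm (u t - seq_mean T u))\<^sup>2) \<and>
     (\<Sum>t=1..T. norm (w t)) \<le> (\<Sum>t=1..T. norm (u t)) \<and>
     (\<Sum>t=1..T. (norm (w t))\<^sup>2) \<le> (\<Sum>t=1..T. (norm (u t))\<^sup>2)"
proof -
  have k1: "1 \<le> k" and tk: "\<tau> + k \<le> T" using assms by auto
  have kp: "real k > 0" using k1 by simp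
  have wa: "w = avgop k \<tau> u" using assms(4) by (simp add: fun_eq_iff avgop_def local_avg_def)
  have mean: "seq_mean T w = seq_mean T u"
    unfolding seq_mean_def wa using sum_avgop[OF k1 tk, of u] by simp
  have shift: "\<And>c. (\<lambda>t. w t - c) = avgop k \<tau> (\<lambda>s. u s - c)"
  proof
    fix c t
    show "w t - c = avgop k \<tau> (\<lambda>s. u s - c) t"
    proof (cases "t \<in> {\<tau>+1..\<tau>+k}")
      case True
      have "(1 / real k) *\<^sub>R (\<Sum>i=1..k. u (\<tau> + i) - c) = (1 / real k) *\<^sub>R (\<Sum>i=1..k. u (\<tau> + i)) - (1 / real k) *\<^sub>R (real (card {1..k}) *\<^sub>R c)"
        by (simp only: sum_subtractf scaleR_diff_right sum_constant_scaleR)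
      also have "\<dots> = (1 / real k) *\<^sub>R (\<Sum>i=1..k. u (\<tau> + i)) - c" using kp by simp
      finally show ?thesis unfolding wa avgop_def if_P[OF True] by simp
    next
      case False then show ?thesis unfolding wa avgop_def if_not_P[OF False] by simp
    qed
  qed
  have gen1: "(\<Sum>t=1..T. norm (w t - c)) \<le> (\<Sum>t=1..T. norm (u t - c))" for c
  proof -
    have "(\<Sum>t=1..T. norm (w t - c)) = (\<Sum>t=1..T. norm (avgop k \<tau> (\<lambda>s. u s - c) t))"
      using shift[of c] by (metis)
    also have "\<dots> \<le> (\<Sum>t=1..T. avgop k \<tau> (\<lambda>s. norm (u s - c)) t)"
      by (rule sum_mono, rule avgop_norm[OF k1])
    also have "\<dots> = (\<Sum>t=1..T. norm (u t - c))" by (rule sum_avgop[OF k1 tk])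
    finally show ?thesis .
  qed
  have gen2: "(\<Sum>t=1..T. (norm (w t - c))\<^sup>2) \<le> (\<Sum>t=1..T. (norm (u t - c))\<^sup>2)" for c
  proof -
    have "(\<Sum>t=1..T. (norm (w t - c))\<^sup>2) = (\<Sum>t=1..T. (norm (avgop k \<tau> (\<lambda>s. u s - c) t))\<^sup>2)"
      using shift[of c] by (metis)
    also have "\<dots> \<le> (\<Sum>t=1..T. avgop k \<tau> (\<lambda>s. (norm (u s - c))\<^sup>2) t)"
      by (rule sum_mono, rule avgop_sq[OF k1])
    also have "\<dots> = (\<Sum>t=1..T. (norm (u t - c))\<^sup>2)" by (rule sum_avgop[OF k1 tk])
    finally show ?thesis .
  qed
  define \<sigma> where "\<sigma> i t = (if t \<in> {\<tau>+1..\<tau>+k} then \<tau> + i else t)" for i t :: nat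
  have wsig: "w t = (1 / real k) *\<^sub>R (\<Sum>i=1..k. u (\<sigma> i t))" for t
  proof (cases "t \<in> {\<tau>+1..\<tau>+k}")
    case True then show ?thesis unfolding wa avgop_def \<sigma>_def if_P[OF True] by simp
  next
    case False
    have "(1 / real k) *\<^sub>R (\<Sum>i=1..k. u (\<sigma> i t)) = (1 / real k) *\<^sub>R (real (card {1..k}) *\<^sub>R u t)"
      unfolding \<sigma>_def if_not_P[OF False] by (simp only: sum_constant_scaleR)
    also have "\<dots> = u t" using kp by simp
    finally show ?thesis unfolding wa avgop_def if_not_P[OF False] by simp
  qed
  have T1: "1 \<le> T" using assms by simp
  have ivl: "{1..T-1} = {1..<T}" using T1 by auto
  have tv: "(\<Sum>t=1..T-1. norm (w (t+1) - w t)) \<le> (\<Sum>t=1..T-1. norm (u (t+1) - u t))"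
  proof -
    have "(\<Sum>t=1..<T. norm (w (Suc t) - w t))
        \<le> (\<Sum>t=1..<T. (1 / real k) * (\<Sum>i=1..k. norm (u (\<sigma> i (Suc t)) - u (\<sigma> i t))))"
    proof (rule sum_mono)
      fix t
      have "w (Suc t) - w t = (1 / real k) *\<^sub>R (\<Sum>i=1..k. u (\<sigma> i (Suc t)) - u (\<sigma> i t))"
        by (simp add: wsig sum_subtractf scaleR_diff_right)
      hence "norm (w (Suc t) - w t) = (1 / real k) * norm (\<Sum>i=1..k. u (\<sigma> i (Suc t)) - u (\<sigma> i t))"
        by simp
      also have "\<dots> \<le> (1 / real k) * (\<Sum>i=1..k. norm (u (\<sigma> i (Suc t)) - u (\<sigma> i t)))"
        by (rule mult_left_mono) (auto intro: norm_sum)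
      finally show "norm (w (Suc t) - w t) \<le> \<dots>" .
    qed
    also have "\<dots> = (1 / real k) * (\<Sum>i=1..k. \<Sum>t=1..<T. norm (u (\<sigma> i (Suc t)) - u (\<sigma> i t)))"
      unfolding sum_distrib_left by (rule sum.swap)
    also have "\<dots> \<le> (1 / real k) * (\<Sum>i=1..k. TVs u 1 T)"
    proof (rule mult_left_mono[OF sum_mono])
      fix i assume i: "i \<in> {1..k}"
      show "(\<Sum>t=1..<T. norm (u (\<sigma> i (Suc t)) - u (\<sigma> i t))) \<le> TVs u 1 T"
        by (rule TV_reparam) (use i tk T1 in \<open>auto simp: \<sigma>_def\<close>)
    qed simp
    also have "\<dots> = TVs u 1 T" using kp by simp
    finally show ?thesis unfolding ivl TVs_def by simp
  qed
  show ?thesis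
    using tv gen1[of "seq_mean T u"] gen2[of "seq_mean T u"] gen1[of 0] gen2[of 0] mean by simp
qed

end
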